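(* Let $U$ be a $\kappa$-cut that is not $(\mathrm{I},\kappa-1)$-small and has at least three sides. Then every other $\kappa$-cut $W$ either is a laminar cut of $U$ (i.e. $W\subseteq U\cup A$ for some side $A$ of $U$) or is itself $(\mathrm{I},\kappa-1)$-small.
   Context: $G=(V,E)$ is a finite, simple, connected, undirected, non-complete graph with $n=|V|$; $\kappa$ is its vertex connectivity, assumed to satisfy $\kappa<n/4$. A cut is a set $U\subset V$ whose removal disconnects $G$; a $\kappa$-cut is a cut of size $\kappa$. A side of a cut $U$ is a connected component of the subgraph induced on $V\setminus U$. A cut $U$ with sides $A_1,\dots,A_a$ is $(\mathrm{I},t)$-small if there is an index $i^\sharp$ with $\sum_{i\neq i^\sharp}|A_i|\le t$. A cut $W$ is a laminar cut of $U$ if $W\subseteq U\cup A$ for some side $A$ of $U$. *)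

theory Defs
  imports Main
begin

definition simple_graph :: "'a set \<Rightarrow> ('a \<Rightarrow> 'a \<Rightarrow> bool) \<Rightarrow> bool" where
  "simple_graph V E \<longleftrightarrow> finite V \<and> (\<forall>x y. E x y \<longrightarrow> x \<in> V \<and> y \<in> V)
     \<and> (\<forall>x y. E x y \<longrightarrow> E y x) \<and> (\<forall>x. \<not> E x x)"

definition reach_in :: "('a \<Rightarrow> 'a \<Rightarrow> bool) \<Rightarrow> 'a set \<Rightarrow> 'a \<Rightarrow> 'a \<Rightarrow> bool" where
  "reach_in E S = (\<lambda>x y. x \<in> S \<and> y \<in> S \<and> E x y)\<^sup>*\<^sup>*"

definition connected_graph :: "'a set \<Rightarrow> ('a \<Rightarrow> 'a \<Rightarrow> bool) \<Rightarrow> bool" where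
  "connected_graph V E \<longleftrightarrow> V \<noteq> {} \<and> (\<forall>x\<in>V. \<forall>y\<in>V. reach_in E V x y)"

definition complete_graph :: "'a set \<Rightarrow> ('a \<Rightarrow> 'a \<Rightarrow> bool) \<Rightarrow> bool" where
  "complete_graph V E \<longleftrightarrow> (\<forall>x\<in>V. \<forall>y\<in>V. x \<noteq> y \<longrightarrow> E x y)"

definition sides :: "'a set \<Rightarrow> ('a \<Rightarrow> 'a \<Rightarrow> bool) \<Rightarrow> 'a set \<Rightarrow> 'a set set" where
  "sides V E U = {{y \<in> V - U. reach_in E (V - U) x y} | x. x \<in> V - U}"

definition is_cut :: "'a set \<Rightarrow> ('a \<Rightarrow> 'a \<Rightarrow> bool) \<Rightarrow> 'a set \<Rightarrow> bool" where
  "is_cut V E U \<longleftrightarrow> U \<subseteq> V \<and> card (sides V E U) \<ge> 2"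

text \<open>Vertex connectivity (for non-complete graphs): minimum size of a cut.\<close>
definition connectivity :: "'a set \<Rightarrow> ('a \<Rightarrow> 'a \<Rightarrow> bool) \<Rightarrow> nat" where
  "connectivity V E = Min (card ` {U. is_cut V E U})"

definition I_small :: "'a set \<Rightarrow> ('a \<Rightarrow> 'a \<Rightarrow> bool) \<Rightarrow> 'a set \<Rightarrow> nat \<Rightarrow> bool" where
  "I_small V E U t \<longleftrightarrow> (\<exists>A0 \<in> sides V E U. (\<Sum>A \<in> sides V E U - {A0}. card A) \<le> t)"

definition laminar_cut :: "'a set \<Rightarrow> ('a \<Rightarrow> 'a \<Rightarrow> bool) \<Rightarrow> 'a set \<Rightarrow> 'a set \<Rightarrow> bool" where
  "laminar_cut V E U W \<longleftrightarrow> is_cut V E W \<and> (\<exists>A \<in> sides V E U. W \<subseteq> U \<union> A)"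

end

theory Submission
  imports Defs
begin

lemma reach_sym:
  assumes "simple_graph V E" "reach_in E S x y" shows "reach_in E S y x"
  using assms(2) unfolding reach_in_def
proof (induction rule: rtranclp_induct)
  case base then show ?case by simp
next
  case (step y z)
  have "E z y" using step(2) assms(1) unfolding simple_graph_def by blast
  show ?case by (rule converse_rtranclp_into_rtranclp[of _ z y]) (use step \<open>E z y\<close> in auto)
qed

lemma reach_trans: "reach_in E S x y \<Longrightarrow> reach_in E S y z \<Longrightarrow> reach_in E S x z"
  unfolding reach_in_def by (rule rtranclp_trans)

lemma sides_obtain:
  assumes "A \<in> sides V E S" obtains x where "x \<in> V - S" "A = {y \<in> V - S. reach_in E (V - S) x y}"
  using assms unfolding sides_def by blast

lemma sides_sub: "A \<in> sides V E S \<Longrightarrow> A \<subseteq> V - S"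
  unfolding sides_def by blast

lemma sides_ne: assumes "A \<in> sides V E S" shows "A \<noteq> {}"
proof -
  obtain x where x: "x \<in> V - S" "A = {y \<in> V - S. reach_in E (V - S) x y}"
    using assms by (rule sides_obtain)
  have "reach_in E (V - S) x x" unfolding reach_in_def by (rule rtranclp.rtrancl_refl)
  then have "x \<in> A" using x by simp
  then show ?thesis by blast
qed

lemma t1: assumes "v \<in> V - S" shows "reach_in E (V - S) v v"
  unfolding reach_in_def by (rule rtranclp.rtrancl_refl)
lemma t2: assumes "v \<in> V - S" shows "{y \<in> V - S. reach_in E (V - S) v y} \<in> sides V E S"
    unfolding sides_def by (rule CollectI, rule exI[where x=v]) (use assms in simp)
lemma t3: assumes "v \<in> V - S" shows "v \<in> {y \<in> V - S. reach_in E (V - S) v y}"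
  using assms t1[OF assms] by (intro CollectI conjI)
lemma sides_cover: assumes "v \<in> V - S" shows "\<exists>A \<in> sides V E S. v \<in> A"
  using t2[OF assms] t3[OF assms] by (rule bexI[rotated])

lemma sides_disj:
  assumes "simple_graph V E" "A \<in> sides V E S" "B \<in> sides V E S" "a \<in> A" "a \<in> B"
  shows "A = B"
proof -
  obtain x where x: "x \<in> V - S" "A = {y \<in> V - S. reach_in E (V - S) x y}"
    using assms(2) by (rule sides_obtain)
  obtain z where z: "z \<in> V - S" "B = {y \<in> V - S. reach_in E (V - S) z y}"
    using assms(3) by (rule sides_obtain)
  have xa: "reach_in E (V-S) x a" and za: "reach_in E (V-S) z a" using x z assms(4,5) by auto
  have "reach_in E (V-S) x z" using reach_trans[OF xa reach_sym[OF assms(1) za]] .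
  moreover have "reach_in E (V-S) z x" using reach_sym[OF assms(1)] calculation by blast
  ultimately have "\<And>v. reach_in E (V-S) x v \<longleftrightarrow> reach_in E (V-S) z v"
    using reach_trans by metis
  then show ?thesis using x z by simp
qed

lemma sides_closed:
  assumes "simple_graph V E" "A \<in> sides V E S" "a \<in> A" "E a y" "y \<notin> S"
  shows "y \<in> A"
proof -
  obtain x where x: "x \<in> V - S" "A = {y \<in> V - S. reach_in E (V - S) x y}"
    using assms(2) by (rule sides_obtain)
  have yV: "y \<in> V" using assms(1,4) unfolding simple_graph_def by blast
  have "reach_in E (V-S) x a" "a \<in> V - S" using x assms(3) by auto
  then have "reach_in E (V-S) x y" using yV assms(4,5) unfolding reach_in_def
    by (simp add: rtranclp.rtrancl_into_rtrancl)
  then show ?thesis using x yV assms(5) by auto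
qed

lemma sides_finite: "simple_graph V E \<Longrightarrow> finite (sides V E S)"
  unfolding simple_graph_def
  by (rule finite_subset[of _ "Pow V"]) (auto simp: sides_def)

lemma sides_finite2: "simple_graph V E \<Longrightarrow> A \<in> sides V E S \<Longrightarrow> finite A"
  unfolding simple_graph_def using sides_sub by (metis finite_Diff finite_subset)

lemma cut_L:
  assumes g: "simple_graph V E" and SV: "S \<subseteq> V" and XS: "X \<subseteq> V - S" and x: "x \<in> X"
    and z: "z \<in> V" "z \<notin> X" "z \<notin> S"
    and cl: "\<And>a y. a \<in> X \<Longrightarrow> E a y \<Longrightarrow> y \<in> X \<or> y \<in> S"
  shows "is_cut V E S"
proof -
  have stay: "y \<in> X" if "reach_in E (V-S) x y" for y
    using that unfolding reach_in_def
  proof (induction rule: rtranclp_induct)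
    case base then show ?case using x by simp
  next
    case (step y w) then show ?case using cl by blast
  qed
  let ?cx = "{y \<in> V - S. reach_in E (V - S) x y}"
  let ?cz = "{y \<in> V - S. reach_in E (V - S) z y}"
  have xV: "x \<in> V - S" using XS x by blast
  have 1: "?cx \<in> sides V E S" using xV unfolding sides_def by blast
  have 2: "?cz \<in> sides V E S" using z unfolding sides_def by blast
  have "z \<in> ?cz" using z unfolding reach_in_def by simp
  moreover have "z \<notin> ?cx" using stay z by blast
  ultimately have "?cx \<noteq> ?cz" by blast
  then have "card {?cx, ?cz} = 2" by simp
  moreover have "{?cx, ?cz} \<subseteq> sides V E S" using 1 2 by blast
  ultimately have "card (sides V E S) \<ge> 2"
    using card_mono[OF sides_finite[OF g, of S], of "{?cx, ?cz}"] by linarith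
  then show ?thesis using SV unfolding is_cut_def by (intro conjI)
qed

lemma conn_le:
  assumes g: "simple_graph V E" and c: "is_cut V E S" shows "connectivity V E \<le> card S"
proof -
  have fV: "finite V" using g unfolding simple_graph_def by blast
  have "{U. is_cut V E U} \<subseteq> Pow V" unfolding is_cut_def by blast
  then have "finite {U. is_cut V E U}" using fV finite_subset by blast
  then show ?thesis unfolding connectivity_def using c by (auto intro: Min_le)
qed

lemma sum_sides:
  assumes g: "simple_graph V E" and A0: "A0 \<in> sides V E S"
  shows "(\<Sum>A \<in> sides V E S - {A0}. card A) = card (V - S - A0)"
proof -
  have pd: "pairwise disjnt (sides V E S - {A0})"
    unfolding pairwise_def disjnt_def
  proof (intro ballI impI)
    fix A B assume A: "A \<in> sides V E S - {A0}" and B: "B \<in> sides V E S - {A0}" and ne: "A \<noteq> B"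
    show "A \<inter> B = {}"
    proof (rule ccontr)
      assume "A \<inter> B \<noteq> {}"
      then obtain a where "a \<in> A" "a \<in> B" by blast
      then have "A = B" using sides_disj[OF g, of A S B a] A B by blast
      with ne show False by simp
    qed
  qed
  have "card (\<Union>(sides V E S - {A0})) = (\<Sum>A \<in> sides V E S - {A0}. card A)"
    by (rule card_Union_disjoint[OF pd]) (rule sides_finite2[OF g], blast)
  moreover have "\<Union>(sides V E S - {A0}) = V - S - A0"
  proof
    show "\<Union>(sides V E S - {A0}) \<subseteq> V - S - A0"
    proof
      fix v assume "v \<in> \<Union>(sides V E S - {A0})"
      then obtain A where A: "A \<in> sides V E S" "A \<noteq> A0" "v \<in> A" by blast
      have "v \<in> V - S" using sides_sub[OF A(1)] A(3) by blast
      moreover have "v \<notin> A0" using sides_disj[OF g A(1) A0 A(3)] A(2) by blast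
      ultimately show "v \<in> V - S - A0" by blast
    qed
    show "V - S - A0 \<subseteq> \<Union>(sides V E S - {A0})"
    proof
      fix v assume v: "v \<in> V - S - A0"
      then obtain A where "A \<in> sides V E S" "v \<in> A" using sides_cover[of v V S E] by blast
      then show "v \<in> \<Union>(sides V E S - {A0})" using v by blast
    qed
  qed
  ultimately show ?thesis by simp
qed

lemma corner:
  assumes g: "simple_graph V E" and UV: "U \<subseteq> V" and WV: "W \<subseteq> V"
    and cW: "card W = connectivity V E"
    and A: "A \<in> sides V E U" and B: "B \<in> sides V E W" and AB: "A \<inter> B \<noteq> {}"
  shows "card (W - U - A) \<le> card (U \<inter> B)"
proof (cases "W - U - A = {}")
  case True then have "card (W - U - A) = 0" by (simp only: card.empty) then show ?thesis by simp
next
  case False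
  then obtain z where z: "z \<in> W - U - A" by blast
  obtain x where x: "x \<in> A \<inter> B" using AB by blast
  have fV: "finite V" using g unfolding simple_graph_def by blast
  let ?S = "(U \<inter> W) \<union> (U \<inter> B) \<union> (A \<inter> W)"
  have Asub: "A \<subseteq> V - U" using sides_sub[OF A] .
  have Bsub: "B \<subseteq> V - W" using sides_sub[OF B] .
  have "is_cut V E ?S"
  proof (rule cut_L[OF g _ _ x])
    show "?S \<subseteq> V" using UV Asub by blast
    show "A \<inter> B \<subseteq> V - ?S" using Asub Bsub by blast
    show "z \<in> V" "z \<notin> A \<inter> B" "z \<notin> ?S" using z WV Bsub by auto
    fix a y assume a: "a \<in> A \<inter> B" and e: "E a y"
    show "y \<in> A \<inter> B \<or> y \<in> ?S"
    proof (cases "y \<in> U")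
      case True
      then show ?thesis using sides_closed[OF g B _ e] a by blast
    next
      case False
      then have "y \<in> A" using sides_closed[OF g A _ e] a by blast
      then show ?thesis using sides_closed[OF g B _ e] a by blast
    qed
  qed
  then have k: "connectivity V E \<le> card ?S" by (rule conn_le[OF g])
  have fin: "finite U" "finite W" "finite A" "finite B"
    using fV UV WV Asub Bsub finite_subset by blast+
  have "card ?S \<le> card (U \<inter> W) + card (U \<inter> B) + card (A \<inter> W)"
    by (metis (no_types, lifting) add_le_mono1 card_Un_le le_trans)
  moreover have "card W = card (U \<inter> W) + card (A \<inter> W) + card (W - U - A)"
  proof -
    have "W = ((U \<inter> W) \<union> (A \<inter> W)) \<union> (W - U - A)" by blast
    moreover have "card (((U \<inter> W) \<union> (A \<inter> W)) \<union> (W - U - A)) = card ((U \<inter> W) \<union> (A \<inter> W)) + card (W - U - A)"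
      by (rule card_Un_disjoint) (use fin in auto)
    moreover have "card ((U \<inter> W) \<union> (A \<inter> W)) = card (U \<inter> W) + card (A \<inter> W)"
      by (rule card_Un_disjoint) (use fin Asub in auto)
    ultimately show ?thesis by metis
  qed
  ultimately show ?thesis using k cW by linarith
qed

theorem corollary1:
  fixes V :: "'a set" and E :: "'a \<Rightarrow> 'a \<Rightarrow> bool" and U W :: "'a set"
  assumes "simple_graph V E"
    and "connected_graph V E"
    and "\<not> complete_graph V E"
    and "4 * connectivity V E < card V"
    and "is_cut V E U" and "card U = connectivity V E"
    and "\<not> I_small V E U (connectivity V E - 1)"
    and "card (sides V E U) \<ge> 3"
    and "is_cut V E W" and "card W = connectivity V E"
    and "W \<noteq> U"
  shows "laminar_cut V E U W \<or> I_small V E W (connectivity V E - 1)"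
proof (cases "laminar_cut V E U W")
  case True then show ?thesis by simp
next
  case False
  note g = assms(1)
  define k where "k = connectivity V E"
  define \<A> where "\<A> = sides V E U"
  define \<B> where "\<B> = sides V E W"
  have UV: "U \<subseteq> V" and WV: "W \<subseteq> V" using assms(5,9) unfolding is_cut_def by auto
  have fV: "finite V" using g unfolding simple_graph_def by blast
  have fU: "finite U" and fW: "finite W" using fV UV WV finite_subset by auto
  have cU: "card U = k" and cW: "card W = k" using assms(6,10) k_def by auto
  have nl: "W - U - A \<noteq> {}" if A: "A \<in> \<A>" for A
  proof
    assume "W - U - A = {}"
    then have "W \<subseteq> U \<union> A" by blast
    then have "laminar_cut V E U W" unfolding laminar_cut_def using assms(9) A unfolding \<A>_def by blast
    with False show False by simp
  qed
  have nl1: "1 \<le> card (W - U - A)" if A: "A \<in> \<A>" for A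
  proof -
    have "finite (W - U - A)" using fW by simp
    then have "0 < card (W - U - A)" using nl[OF A] card_gt_0_iff by blast
    then show ?thesis by simp
  qed
  have cor: "\<And>A B. A \<in> \<A> \<Longrightarrow> B \<in> \<B> \<Longrightarrow> A \<inter> B \<noteq> {} \<Longrightarrow> card (W - U - A) \<le> card (U \<inter> B)"
    unfolding \<A>_def \<B>_def by (rule corner[OF g UV WV assms(10)])
  have Asub: "\<And>A. A \<in> \<A> \<Longrightarrow> A \<subseteq> V - U" unfolding \<A>_def by (rule sides_sub)
  have Bsub: "\<And>B. B \<in> \<B> \<Longrightarrow> B \<subseteq> V - W" unfolding \<B>_def by (rule sides_sub)
  have Adisj: "\<And>A A' a. A \<in> \<A> \<Longrightarrow> A' \<in> \<A> \<Longrightarrow> a \<in> A \<Longrightarrow> a \<in> A' \<Longrightarrow> A = A'"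
    unfolding \<A>_def by (rule sides_disj[OF g])
  have Bdisj: "\<And>B B' a. B \<in> \<B> \<Longrightarrow> B' \<in> \<B> \<Longrightarrow> a \<in> B \<Longrightarrow> a \<in> B' \<Longrightarrow> B = B'"
    unfolding \<B>_def by (rule sides_disj[OF g])
  have Acov: "\<And>v. v \<in> V - U \<Longrightarrow> \<exists>A\<in>\<A>. v \<in> A" unfolding \<A>_def by (rule sides_cover)
  have Bcov: "\<And>v. v \<in> V - W \<Longrightarrow> \<exists>B\<in>\<B>. v \<in> B" unfolding \<B>_def by (rule sides_cover)
  have Ane: "\<And>A. A \<in> \<A> \<Longrightarrow> A \<noteq> {}" unfolding \<A>_def by (rule sides_ne)
  have Bne: "\<And>B. B \<in> \<B> \<Longrightarrow> B \<noteq> {}" unfolding \<B>_def by (rule sides_ne)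
  have m: "card (U - W) = card (W - U)"
  proof -
    have "card ((U - W) \<union> (U \<inter> W)) = card (U - W) + card (U \<inter> W)"
      by (rule card_Un_disjoint) (use fU in auto)
    moreover have "(U - W) \<union> (U \<inter> W) = U" by blast
    ultimately have "card U = card (U - W) + card (U \<inter> W)" by simp
    moreover have "card ((W - U) \<union> (U \<inter> W)) = card (W - U) + card (U \<inter> W)"
      by (rule card_Un_disjoint) (use fW in auto)
    moreover have "(W - U) \<union> (U \<inter> W) = W" by blast
    ultimately have "card U = card (U - W) + card (U \<inter> W)" "card W = card (W - U) + card (U \<inter> W)" by simp_all
    then show ?thesis using cU cW by simp
  qed
  have "card (U - W) \<le> card U" by (rule card_mono[OF fU]) blast
  then have mk: "card (U - W) \<le> k" using cU by simp
  have two: "\<And>B B'. B \<in> \<B> \<Longrightarrow> B' \<in> \<B> \<Longrightarrow> B \<noteq> B' \<Longrightarrow> card (U \<inter> B) + card (U \<inter> B') \<le> card (U - W)"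
  proof -
    fix B B' assume B: "B \<in> \<B>" and B': "B' \<in> \<B>" and ne: "B \<noteq> B'"
    have "card ((U \<inter> B) \<union> (U \<inter> B')) = card (U \<inter> B) + card (U \<inter> B')"
      by (rule card_Un_disjoint) (use fU Bdisj[OF B B'] ne in auto)
    moreover have "card ((U \<inter> B) \<union> (U \<inter> B')) \<le> card (U - W)"
      by (rule card_mono) (use fU Bsub[OF B] Bsub[OF B'] in auto)
    ultimately show "card (U \<inter> B) + card (U \<inter> B') \<le> card (U - W)" by simp
  qed
  have F1: "\<And>B. B \<in> \<B> \<Longrightarrow> U \<inter> B \<noteq> {}"
  proof -
    fix B assume B: "B \<in> \<B>"
    obtain b where b: "b \<in> B" using Bne[OF B] by blast
    show "U \<inter> B \<noteq> {}"
    proof (cases "b \<in> U")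
      case True then show ?thesis using b by blast
    next
      case False
      then obtain A where A: "A \<in> \<A>" "b \<in> A" using Acov b Bsub[OF B] by blast
      have "A \<inter> B \<noteq> {}" using A b by blast
      then have "card (W - U - A) \<le> card (U \<inter> B)" by (rule cor[OF A(1) B])
      then have "1 \<le> card (U \<inter> B)" using nl1[OF A(1)] by linarith
      then show ?thesis by auto
    qed
  qed
  have F1c: "\<And>B. B \<in> \<B> \<Longrightarrow> 1 \<le> card (U \<inter> B)"
    using F1 fU by (simp add: Suc_le_eq card_gt_0_iff)
  have P: False if B: "B \<in> \<B>" and B': "B' \<in> \<B>" and ne: "B \<noteq> B'" and A: "A \<in> \<A>" and A': "A' \<in> \<A>"
     and neA: "A \<noteq> A'" and AB: "A \<inter> B \<noteq> {}" and AB': "A' \<inter> B' \<noteq> {}" for A A' B B'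
  proof -
    have c1: "card (W - U - A) \<le> card (U \<inter> B)" by (rule cor[OF A B AB])
    have c2: "card (W - U - A') \<le> card (U \<inter> B')" by (rule cor[OF A' B' AB'])
    have AA: "A \<inter> A' = {}" using Adisj[OF A A'] neA by blast
    have h: "card (W - U - A) + card (W - U - A') = card ((W - U - A) \<union> (W - U - A')) + card ((W - U - A) \<inter> (W - U - A'))"
      by (rule card_Un_Int) (use fW in auto)
    have u: "(W - U - A) \<union> (W - U - A') = W - U" using AA by blast
    have i: "(W - U - A) \<inter> (W - U - A') = W - U - A - A'" by blast
    have eq: "card (W - U - A) + card (W - U - A') = card (W - U) + card (W - U - A - A')"
      using h unfolding u i .
    have "card (W - U - A - A') = 0" using eq c1 c2 two[OF B B' ne] m by linarith
    then have e: "W - U - A - A' = {}" using fW by simp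
    have "\<not> \<A> \<subseteq> {A, A'}"
    proof
      assume "\<A> \<subseteq> {A, A'}"
      then have "card \<A> \<le> card {A, A'}" by (rule card_mono[rotated]) simp
      also have "\<dots> \<le> 2" by (simp add: card_insert_le_m1)
      finally show False using assms(8) \<A>_def by simp
    qed
    then obtain A3 where A3: "A3 \<in> \<A>" "A3 \<noteq> A" "A3 \<noteq> A'" by blast
    obtain x where x: "x \<in> A3" using Ane[OF A3(1)] by blast
    have xA: "x \<notin> A" "x \<notin> A'" using Adisj[OF A3(1) A] Adisj[OF A3(1) A'] A3 x by auto
    have xW: "x \<notin> W" using e x xA Asub[OF A3(1)] by blast
    then obtain B'' where B'': "B'' \<in> \<B>" "x \<in> B''" using Bcov x Asub[OF A3(1)] by blast
    have "W - U - A3 = W - U" using e Adisj[OF A3(1) A] Adisj[OF A3(1) A'] A3 by blast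
    moreover have "A3 \<inter> B'' \<noteq> {}" using x B'' by blast
    then have "card (W - U - A3) \<le> card (U \<inter> B'')" by (rule cor[OF A3(1) B''(1)])
    ultimately have c3: "card (W - U) \<le> card (U \<inter> B'')" by simp
    show False
    proof (cases "B'' = B")
      case True
      then have "card (U \<inter> B'') + card (U \<inter> B') \<le> card (U - W)" using two[OF B''(1) B'] ne by blast
      then show ?thesis using c3 m c2 nl1[OF A'] by linarith
    next
      case False
      then have "card (U \<inter> B'') + card (U \<inter> B) \<le> card (U - W)" using two[OF B''(1) B] by blast
      then show ?thesis using c3 m c1 nl1[OF A] by linarith
    qed
  qed
  show ?thesis
  proof (cases "\<exists>B\<in>\<B>. \<exists>B'\<in>\<B>. \<exists>A\<in>\<A>. \<exists>A'\<in>\<A>. B \<noteq> B' \<and> A \<inter> B \<noteq> {} \<and> A' \<inter> B' \<noteq> {}")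
    case True
    then obtain B B' A A' where B: "B \<in> \<B>" and B': "B' \<in> \<B>" and A: "A \<in> \<A>" and A': "A' \<in> \<A>"
      and ne: "B \<noteq> B'" and AB: "A \<inter> B \<noteq> {}" and AB': "A' \<inter> B' \<noteq> {}" by blast
    have AA: "A = A'" using P[OF B B' ne A A' _ AB AB'] by blast
    have sub: "V - U - A \<subseteq> W - U - A"
    proof
      fix v assume v: "v \<in> V - U - A"
      show "v \<in> W - U - A"
      proof (rule ccontr)
        assume "v \<notin> W - U - A"
        then have vW: "v \<notin> W" using v by blast
        obtain A'' where A'': "A'' \<in> \<A>" "v \<in> A''" using Acov v by blast
        obtain B'' where B'': "B'' \<in> \<B>" "v \<in> B''" using Bcov v vW by blast
        have "A'' \<noteq> A" using A'' v by blast
        show False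
        proof (cases "B'' = B")
          case True
          then show False using P[OF B''(1) B' _ A''(1) A \<open>A'' \<noteq> A\<close> _ ] ne A'' B'' AB' AA by blast
        next
          case False
          then show False using P[OF B''(1) B _ A''(1) A \<open>A'' \<noteq> A\<close> _ AB] A'' B'' by blast
        qed
      qed
    qed
    have "card (V - U - A) \<le> card (W - U - A)" by (rule card_mono) (use fW sub in auto)
    also have "\<dots> \<le> card (U \<inter> B)" by (rule cor[OF A B AB])
    finally have "card (V - U - A) \<le> k - 1" using two[OF B B' ne] F1c[OF B'] mk by linarith
    moreover have "(\<Sum>A0 \<in> sides V E U - {A}. card A0) = card (V - U - A)"
      using sum_sides[OF g, of A U] A unfolding \<A>_def by simp
    ultimately have "I_small V E U (connectivity V E - 1)"
      unfolding I_small_def by (intro bexI[where x=A]) (use A \<A>_def k_def in auto)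
    then show ?thesis using assms(7) by blast
  next
    case False
    have Bn: "\<B> \<noteq> {}" proof assume "\<B> = {}" then show False using assms(9) unfolding \<B>_def is_cut_def by simp qed
    obtain B0 where B0: "B0 \<in> \<B>" and B0p: "(\<exists>A\<in>\<A>. A \<inter> B0 \<noteq> {}) \<or> (\<forall>B\<in>\<B>. \<forall>A\<in>\<A>. A \<inter> B = {})"
    proof (cases "\<exists>B\<in>\<B>. \<exists>A\<in>\<A>. A \<inter> B \<noteq> {}")
      case True
      then obtain B A where "B \<in> \<B>" "A \<in> \<A>" "A \<inter> B \<noteq> {}" by blast
      then show ?thesis using that by blast
    next
      case False
      obtain B where "B \<in> \<B>" using Bn by blast
      then show ?thesis using that False by blast
    qed
    have others: "\<And>B. B \<in> \<B> \<Longrightarrow> B \<noteq> B0 \<Longrightarrow> B \<subseteq> U"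
    proof
      fix B b assume B: "B \<in> \<B>" and ne: "B \<noteq> B0" and b: "b \<in> B"
      show "b \<in> U"
      proof (rule ccontr)
        assume "b \<notin> U"
        then obtain A where A: "A \<in> \<A>" "b \<in> A" using Acov b Bsub[OF B] by blast
        then have "A \<inter> B \<noteq> {}" using b by blast
        then show False using B0p False B B0 ne A by blast
      qed
    qed
    have sub: "V - W - B0 \<subseteq> (U - W) - (U \<inter> B0)"
    proof
      fix v assume v: "v \<in> V - W - B0"
      then obtain B where B: "B \<in> \<B>" "v \<in> B" using Bcov by blast
      then have "B \<noteq> B0" using v by blast
      then show "v \<in> (U - W) - (U \<inter> B0)" using others[OF B(1)] B v by blast
    qed
    have "card (V - W - B0) \<le> card ((U - W) - (U \<inter> B0))" by (rule card_mono) (use fU sub in auto)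
    also have "\<dots> = card (U - W) - card (U \<inter> B0)"
      by (rule card_Diff_subset) (use fU Bsub[OF B0] in auto)
    finally have "card (V - W - B0) \<le> k - 1" using F1c[OF B0] mk by linarith
    moreover have "(\<Sum>B \<in> sides V E W - {B0}. card B) = card (V - W - B0)"
      using sum_sides[OF g, of B0 W] B0 unfolding \<B>_def by simp
    ultimately have "I_small V E W (connectivity V E - 1)"
      unfolding I_small_def by (intro bexI[where x=B0]) (use B0 \<B>_def k_def in auto)
    then show ?thesis by blast
  qed
qed

end
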